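(* Let $\langle\mathbf{B},\mathbf{I}\rangle$ be a Bochvar system. Let $\mathbb{A}_{\mathbb{B}}$ be the semilattice direct system with: - index join-semilattice $I$ ordered dually to $\mathbf{B}$, with least element $1$; - fibres $\mathbf{B}/[i)$ for $i\in I$; - maps $p_{ij}(a/[i))=a/[j)$ for $j\le_{\mathbf{B}}i$. Then the Płonka sum of $\mathbb{A}_{\mathbb{B}}$, an algebra of type $\langle\wedge,\vee,\neg,0,1\rangle$, is the $\{\wedge,\vee,\neg,0,1\}$-reduct of a unique Bochvar algebra. In other words, there is exactly one unary operation $J_2$ on it making it a Bochvar algebra.
   Context: A Bochvar system is a pair $\langle\mathbf{B},\mathbf{I}\rangle$ where $\mathbf{B}$ is a Boolean algebra and $I\subseteq B$ contains $1$ and is closed under $\wedge$. $[i)$ is the principal filter of $\mathbf{B}$ generated by $i$. $\mathbf{B}/[i)$ is the quotient by $\{\langle a,b\rangle:(\neg a\vee b)\wedge(\neg b\vee a)\in[i)\}$. Płonka sum of a semilattice direct system $\langle\{\mathbf{A}_i\},\langle I,\vee,i_0\rangle,\{p_{ij}\}\rangle$: the universe is the disjoint union of the $A_i$. Operations are $g(a_1,\dots,a_n)=g^{\mathbf{A}_k}(p_{i_1k}(a_1),\dots,p_{i_nk}(a_n))$ for $a_m\in A_{i_m}$ and $k=\bigvee i_m$; constants are those of $\mathbf{A}_{i_0}$. $\mathbf{WK}^e$ is the three-element algebra on $\{0,\tfrac12,1\}$ of type $\langle\wedge,\vee,\neg,J_2,0,1\rangle$. Its operations are: - $\neg$ swaps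 $0,1$ and fixes $\tfrac12$; - $\wedge,\vee$ are Boolean on $\{0,1\}$ and return $\tfrac12$ whenever some argument is $\tfrac12$; - $J_2(1)=1$ and $J_2(\tfrac12)=J_2(0)=0$. Bochvar algebras are the members of $ISP(\mathbf{WK}^e)$. *)

theory Defs
  imports Main
begin

datatype wk = W0 | Wh | W1

fun wk_neg :: "wk \<Rightarrow> wk" where
  "wk_neg W0 = W1" | "wk_neg W1 = W0" | "wk_neg Wh = Wh"

fun wk_and :: "wk \<Rightarrow> wk \<Rightarrow> wk" where
  "wk_and Wh _ = Wh" | "wk_and _ Wh = Wh"
| "wk_and W1 W1 = W1" | "wk_and W1 W0 = W0" | "wk_and W0 W1 = W0" | "wk_and W0 W0 = W0"

fun wk_or :: "wk \<Rightarrow> wk \<Rightarrow> wk" where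
  "wk_or Wh _ = Wh" | "wk_or _ Wh = Wh"
| "wk_or W0 W0 = W0" | "wk_or W1 W0 = W1" | "wk_or W0 W1 = W1" | "wk_or W1 W1 = W1"

fun wk_J2 :: "wk \<Rightarrow> wk" where
  "wk_J2 W1 = W1" | "wk_J2 Wh = W0" | "wk_J2 W0 = W0"

text \<open>An algebra of type (and, or, neg, J2, 0, 1) with carrier U (given as a subset of
  some type 'b, operations given as functions on 'b) lies in ISP(WK^e) iff U is closed under
  the operations and there is an injective homomorphism h from it into the direct power
  (WK^e)^X for some index set X. The index set is taken from the type 'b => wk, which is
  large enough for every algebra on a carrier in 'b.\<close>

definition bochvar_algebra ::
  "'b set \<Rightarrow> ('b \<Rightarrow> 'b \<Rightarrow> 'b) \<Rightarrow> ('b \<Rightarrow> 'b \<Rightarrow> 'b) \<Rightarrow> ('b \<Rightarrow> 'b) \<Rightarrow> ('b \<Rightarrow> 'b)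
   \<Rightarrow> 'b \<Rightarrow> 'b \<Rightarrow> bool" where
  "bochvar_algebra U mt jn ng j2 z u \<longleftrightarrow>
     (\<forall>x\<in>U. \<forall>y\<in>U. mt x y \<in> U \<and> jn x y \<in> U) \<and>
     (\<forall>x\<in>U. ng x \<in> U \<and> j2 x \<in> U) \<and> z \<in> U \<and> u \<in> U \<and>
     (\<exists>(X :: ('b \<Rightarrow> wk) set) (h :: 'b \<Rightarrow> ('b \<Rightarrow> wk) \<Rightarrow> wk).
        (\<forall>x\<in>U. \<forall>y\<in>U. \<forall>s\<in>X. h (mt x y) s = wk_and (h x s) (h y s)) \<and>
        (\<forall>x\<in>U. \<forall>y\<in>U. \<forall>s\<in>X. h (jn x y) s = wk_or (h x s) (h y s)) \<and>
        (\<forall>x\<in>U. \<forall>s\<in>X. h (ng x) s = wk_neg (h x s)) \<and>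
        (\<forall>x\<in>U. \<forall>s\<in>X. h (j2 x) s = wk_J2 (h x s)) \<and>
        (\<forall>s\<in>X. h z s = W0) \<and> (\<forall>s\<in>X. h u s = W1) \<and>
        (\<forall>x\<in>U. \<forall>y\<in>U. (\<forall>s\<in>X. h x s = h y s) \<longrightarrow> x = y))"

definition bochvar_system :: "'a::boolean_algebra set \<Rightarrow> bool" where
  "bochvar_system I \<longleftrightarrow> top \<in> I \<and> (\<forall>i\<in>I. \<forall>j\<in>I. inf i j \<in> I)"

text \<open>The class a/[i) of a in B/[i), where [i) = {x. i \<le> x} is the principal filter.\<close>
definition fcls :: "'a::boolean_algebra \<Rightarrow> 'a \<Rightarrow> 'a set" where
  "fcls i a = {b. inf (sup (- a) b) (sup (- b) a) \<in> {x. i \<le> x}}"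

definition crep :: "'a set \<Rightarrow> 'a" where
  "crep S = (SOME a. a \<in> S)"

definition ptrans :: "'a::boolean_algebra \<Rightarrow> 'a set \<Rightarrow> 'a set" where
  "ptrans j S = fcls j (crep S)"

text \<open>Elements of the Plonka sum: pairs (i, a/[i)) with i \<in> I (disjoint union of fibres).\<close>
definition pl_univ :: "'a::boolean_algebra set \<Rightarrow> ('a \<times> 'a set) set" where
  "pl_univ I = {(i, fcls i a) | i a. i \<in> I}"

text \<open>The join in the index semilattice (ordered dually to B) is the meet of B.\<close>
definition pl_meet :: "('a::boolean_algebra \<times> 'a set) \<Rightarrow> ('a \<times> 'a set) \<Rightarrow> ('a \<times> 'a set)" where
  "pl_meet x y = (let k = inf (fst x) (fst y) in
     (k, fcls k (inf (crep (ptrans k (snd x))) (crep (ptrans k (snd y))))))"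

definition pl_join :: "('a::boolean_algebra \<times> 'a set) \<Rightarrow> ('a \<times> 'a set) \<Rightarrow> ('a \<times> 'a set)" where
  "pl_join x y = (let k = inf (fst x) (fst y) in
     (k, fcls k (sup (crep (ptrans k (snd x))) (crep (ptrans k (snd y))))))"

definition pl_neg :: "('a::boolean_algebra \<times> 'a set) \<Rightarrow> ('a \<times> 'a set)" where
  "pl_neg x = (fst x, fcls (fst x) (- crep (snd x)))"

text \<open>Constants come from the fibre at the least index 1 (= top of B).\<close>
definition pl_zero :: "('a::boolean_algebra \<times> 'a set)" where
  "pl_zero = (top, fcls top bot)"

definition pl_one :: "('a::boolean_algebra \<times> 'a set)" where
  "pl_one = (top, fcls top top)"

end

theory Submission
  imports Defs
begin

definition ultra :: "('a::boolean_algebra \<Rightarrow> bool) \<Rightarrow> bool" where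
  "ultra \<phi> \<longleftrightarrow> \<phi> top \<and> (\<forall>a b. \<phi> (inf a b) = (\<phi> a \<and> \<phi> b)) \<and> (\<forall>a. \<phi> (- a) = (\<not> \<phi> a))"

definition isfilt :: "'a::boolean_algebra set \<Rightarrow> bool" where
  "isfilt F \<longleftrightarrow> top \<in> F \<and> bot \<notin> F \<and> (\<forall>x\<in>F. \<forall>y. x \<le> y \<longrightarrow> y \<in> F) \<and> (\<forall>x\<in>F. \<forall>y\<in>F. inf x y \<in> F)"

lemma ultra_exists:
  fixes c :: "'a::boolean_algebra"
  assumes "c \<noteq> bot"
  shows "\<exists>\<phi>. ultra \<phi> \<and> \<phi> c"
proof -
  let ?A = "{F. isfilt F \<and> c \<in> F}"
  have ne: "{x. c \<le> x} \<in> ?A" using assms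
    by (auto simp: isfilt_def bot_unique intro: order_trans)
  have "\<exists>M\<in>?A. \<forall>X\<in>?A. M \<subseteq> X \<longrightarrow> X = M"
  proof (rule subset_Zorn_nonempty)
    show "?A \<noteq> {}" using ne by blast
    fix C assume C: "C \<noteq> {}" "subset.chain ?A C"
    have sub: "C \<subseteq> ?A" and ch: "\<forall>x\<in>C. \<forall>y\<in>C. x \<subseteq> y \<or> y \<subseteq> x"
      using C(2) by (auto simp: subset.chain_def)
    show "\<Union>C \<in> ?A"
    proof -
      have "top \<in> \<Union>C" using C(1) sub by (auto simp: isfilt_def)
      moreover have "bot \<notin> \<Union>C" using sub by (auto simp: isfilt_def)
      moreover have "c \<in> \<Union>C" using C(1) sub by auto
      moreover have "\<forall>x\<in>\<Union>C. \<forall>y. x \<le> y \<longrightarrow> y \<in> \<Union>C"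
      proof (intro ballI allI impI)
        fix x y assume "x \<in> \<Union>C" "x \<le> y"
        then obtain X where "X \<in> C" "x \<in> X" by blast
        then have "y \<in> X" using sub \<open>x \<le> y\<close> unfolding isfilt_def by blast
        then show "y \<in> \<Union>C" using \<open>X \<in> C\<close> by blast
      qed
      moreover have "\<forall>x\<in>\<Union>C. \<forall>y\<in>\<Union>C. inf x y \<in> \<Union>C"
      proof (intro ballI)
        fix x y assume "x \<in> \<Union>C" "y \<in> \<Union>C"
        then obtain X Y where XY: "X \<in> C" "Y \<in> C" "x \<in> X" "y \<in> Y" by blast
        show "inf x y \<in> \<Union>C"
        proof (cases "X \<subseteq> Y")
          case True
          then have "x \<in> Y" using XY by blast
          then have "inf x y \<in> Y" using XY sub unfolding isfilt_def by blast
          then show ?thesis using XY by blast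
        next
          case False then have "Y \<subseteq> X" using ch XY by blast
          then have "y \<in> X" using XY by blast
          then have "inf x y \<in> X" using XY sub unfolding isfilt_def by blast
          then show ?thesis using XY by blast
        qed
      qed
      ultimately show ?thesis by (simp add: isfilt_def)
    qed
  qed
  then obtain M where M: "isfilt M" "c \<in> M" and mx: "\<And>X. isfilt X \<Longrightarrow> c \<in> X \<Longrightarrow> M \<subseteq> X \<Longrightarrow> X = M"
    by blast
  have up: "\<And>x y. x \<in> M \<Longrightarrow> x \<le> y \<Longrightarrow> y \<in> M" and cl: "\<And>x y. x \<in> M \<Longrightarrow> y \<in> M \<Longrightarrow> inf x y \<in> M"
    and tp: "top \<in> M" and nb: "bot \<notin> M" using M(1) by (auto simp: isfilt_def)
  have compl: "a \<in> M \<or> - a \<in> M" for a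
  proof (rule ccontr)
    assume na: "\<not> (a \<in> M \<or> - a \<in> M)"
    let ?F = "{x. \<exists>f\<in>M. inf f a \<le> x}"
    have nob: "bot \<notin> ?F"
    proof
      assume "bot \<in> ?F"
      then obtain f where "f \<in> M" "inf f a \<le> bot" by blast
      then have "f \<le> - a" by (simp add: bot_unique inf_shunt)
      then show False using na up \<open>f \<in> M\<close> by blast
    qed
    have "isfilt ?F"
      unfolding isfilt_def
    proof (intro conjI ballI allI impI)
      show "top \<in> ?F" using tp by auto
      show "bot \<notin> ?F" by fact
      show "y \<in> ?F" if "x \<in> ?F" "x \<le> y" for x y using that order_trans by blast
      show "inf x y \<in> ?F" if xy: "x \<in> ?F" "y \<in> ?F" for x y
      proof -
        obtain f g where "f \<in> M" "g \<in> M" "inf f a \<le> x" "inf g a \<le> y" using xy by blast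
        then have "inf (inf f g) a \<le> inf x y" by (meson inf.cobounded1 inf.cobounded2 inf_greatest inf_mono order_trans)
        then show ?thesis using cl \<open>f \<in> M\<close> \<open>g \<in> M\<close> by blast
      qed
    qed
    moreover have "c \<in> ?F" using M(2) inf.cobounded1 by blast
    moreover have "M \<subseteq> ?F" using inf.cobounded1 by blast
    ultimately have "?F = M" using mx by blast
    moreover have "a \<in> ?F" using tp by auto
    ultimately show False using na by blast
  qed
  have "ultra (\<lambda>x. x \<in> M)"
    unfolding ultra_def
  proof (intro conjI allI)
    show "top \<in> M" by fact
    show "(inf a b \<in> M) = (a \<in> M \<and> b \<in> M)" for a b
      using cl up by (meson inf.cobounded1 inf.cobounded2)
    show "(- a \<in> M) = (a \<notin> M)" for a
      using compl cl nb by (metis inf_compl_bot)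
  qed
  then show ?thesis using M(2) by blast
qed

lemma ultra_sep:
  fixes x y :: "'a::boolean_algebra"
  assumes "\<And>\<phi>. ultra \<phi> \<Longrightarrow> \<phi> x = \<phi> y"
  shows "x = y"
proof (rule ccontr)
  assume "x \<noteq> y"
  then have "inf x (- y) \<noteq> bot \<or> inf y (- x) \<noteq> bot"
    by (metis inf_shunt compl_le_compl_iff double_compl order.antisym)
  then show False
  proof
    assume "inf x (- y) \<noteq> bot"
    then obtain \<phi> where "ultra \<phi>" "\<phi> (inf x (- y))" using ultra_exists by blast
    then show False using assms[of \<phi>] by (simp add: ultra_def)
  next
    assume "inf y (- x) \<noteq> bot"
    then obtain \<phi> where "ultra \<phi>" "\<phi> (inf y (- x))" using ultra_exists by blast
    then show False using assms[of \<phi>] by (simp add: ultra_def)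
  qed
qed


lemma fcls_mem: "b \<in> fcls i a \<longleftrightarrow> inf i b = inf i a"
proof -
  have "b \<in> fcls i a \<longleftrightarrow> i \<le> sup (- a) b \<and> i \<le> sup (- b) a" by (simp add: fcls_def)
  also have "\<dots> \<longleftrightarrow> inf i a \<le> b \<and> inf i b \<le> a"
    by (simp add: shunt1)
  also have "\<dots> \<longleftrightarrow> inf i b = inf i a"
  proof
    assume h: "inf i a \<le> b \<and> inf i b \<le> a"
    then have "inf i a \<le> inf i b" "inf i b \<le> inf i a" by simp_all
    then show "inf i b = inf i a" by (rule order.antisym[rotated])
  next
    assume "inf i b = inf i a"
    then show "inf i a \<le> b \<and> inf i b \<le> a" by (metis inf.cobounded2)
  qed
  finally show ?thesis .
qed

lemma fcls_self: "a \<in> fcls i a" by (simp add: fcls_mem)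

lemma fcls_eq: "fcls i a = fcls i b \<longleftrightarrow> inf i a = inf i b"
proof
  assume "fcls i a = fcls i b"
  then have "a \<in> fcls i b" using fcls_self by metis
  then show "inf i a = inf i b" by (simp add: fcls_mem)
next
  assume "inf i a = inf i b"
  then show "fcls i a = fcls i b" by (simp add: set_eq_iff fcls_mem)
qed

lemma crep_fcls: "inf i (crep (fcls i a)) = inf i a"
proof -
  have "crep (fcls i a) \<in> fcls i a" unfolding crep_def by (rule someI[of _ a]) (rule fcls_self)
  then show ?thesis by (simp add: fcls_mem)
qed

lemma inf_cong_k: "(k::'a::boolean_algebra) \<le> i \<Longrightarrow> inf i c = inf i a \<Longrightarrow> inf k c = inf k a"
proof -
  assume k: "k \<le> i" and e: "inf i c = inf i a"
  have ki: "inf k i = k" using k by (simp add: le_iff_inf)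
  have "inf k c = inf (inf k i) c" by (simp only: ki)
  also have "\<dots> = inf k (inf i c)" by (rule inf.assoc)
  also have "\<dots> = inf k (inf i a)" using e by simp
  also have "\<dots> = inf (inf k i) a" by (rule inf.assoc[symmetric])
  also have "\<dots> = inf k a" by (simp only: ki)
  finally show ?thesis .
qed

lemma ptrans_fcls: assumes "k \<le> i" shows "ptrans k (fcls i a) = fcls k a"
  unfolding ptrans_def fcls_eq using inf_cong_k[OF assms crep_fcls] .

lemma pl_meet_fcls: "pl_meet (i, fcls i a) (j, fcls j b) = (inf i j, fcls (inf i j) (inf a b))"
proof -
  let ?k = "inf i j"
  have 1: "inf ?k (crep (fcls ?k a)) = inf ?k a" "inf ?k (crep (fcls ?k b)) = inf ?k b"
    by (rule crep_fcls)+
  have "inf ?k (inf (crep (fcls ?k a)) (crep (fcls ?k b))) = inf ?k (inf a b)"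
  proof -
    have d: "inf ?k (inf x y) = inf (inf ?k x) (inf ?k y)" for x y
      by (simp add: inf.assoc inf.left_commute)
    show ?thesis by (simp only: d 1)
  qed
  then show ?thesis
    by (simp add: pl_meet_def Let_def ptrans_fcls fcls_eq)
qed

lemma pl_join_fcls: "pl_join (i, fcls i a) (j, fcls j b) = (inf i j, fcls (inf i j) (sup a b))"
proof -
  let ?k = "inf i j"
  have 1: "inf ?k (crep (fcls ?k a)) = inf ?k a" "inf ?k (crep (fcls ?k b)) = inf ?k b"
    by (rule crep_fcls)+
  have "inf ?k (sup (crep (fcls ?k a)) (crep (fcls ?k b))) = inf ?k (sup a b)"
    using 1 by (simp add: inf_sup_distrib1)
  then show ?thesis
    by (simp add: pl_join_def Let_def ptrans_fcls fcls_eq)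
qed

lemma inf_neg_cong: "inf (i::'a::boolean_algebra) c = inf i a \<Longrightarrow> inf i (- c) = inf i (- a)"
proof -
  have e: "inf i (- x) = inf i (- inf i x)" for x :: 'a
    by (simp add: inf_sup_distrib1)
  assume h: "inf i c = inf i a"
  have "inf i (- c) = inf i (- inf i c)" by (rule e)
  also have "\<dots> = inf i (- inf i a)" by (simp only: h)
  also have "\<dots> = inf i (- a)" by (rule e[symmetric])
  finally show ?thesis .
qed

lemma pl_neg_fcls: "pl_neg (i, fcls i a) = (i, fcls i (- a))"
  unfolding pl_neg_def fst_conv snd_conv fcls_eq prod.inject using inf_neg_cong[OF crep_fcls] by simp

lemma pl_univ_mem: "x \<in> pl_univ I \<longleftrightarrow> (\<exists>i a. x = (i, fcls i a) \<and> i \<in> I)"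
  by (auto simp: pl_univ_def)

lemma pl_univ_fcls[simp]: "(i, fcls i a) \<in> pl_univ I \<longleftrightarrow> i \<in> I"
  by (auto simp: pl_univ_def)

lemma fcls_top: "fcls top a = fcls top b \<longleftrightarrow> a = b"
  by (simp add: fcls_eq)

lemma ultra_simps:
  assumes "ultra \<phi>"
  shows "\<phi> (inf a b) = (\<phi> a \<and> \<phi> b)" "\<phi> (- a) = (\<not> \<phi> a)" "\<phi> top" "\<not> \<phi> bot"
    "\<phi> (sup a b) = (\<phi> a \<or> \<phi> b)"
proof -
  show 1: "\<phi> (inf a b) = (\<phi> a \<and> \<phi> b)" "\<phi> (- a) = (\<not> \<phi> a)" "\<phi> top"
    using assms by (auto simp: ultra_def)
  have "\<phi> (- top) = (\<not> \<phi> top)" using assms unfolding ultra_def by blast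
  then show "\<not> \<phi> bot" using 1 by simp
  have "\<phi> (sup a b) = \<phi> (- inf (- a) (- b))" by simp
  also have "\<dots> = (\<phi> a \<or> \<phi> b)" using 1 assms unfolding ultra_def by blast
  finally show "\<phi> (sup a b) = (\<phi> a \<or> \<phi> b)" .
qed


definition Jb :: "('a::boolean_algebra \<times> 'a set) \<Rightarrow> ('a \<times> 'a set)" where
  "Jb x = (top, fcls top (inf (fst x) (crep (snd x))))"

lemma Jb_fcls: "Jb (i, fcls i a) = (top, fcls top (inf i a))"
  by (simp add: Jb_def crep_fcls)

definition hv :: "('a \<Rightarrow> bool) \<Rightarrow> 'a \<Rightarrow> 'a \<Rightarrow> wk" where
  "hv \<phi> i c = (if \<phi> i then (if \<phi> c then W1 else W0) else Wh)"

definition phs :: "(('a::boolean_algebra \<times> 'a set) \<Rightarrow> wk) \<Rightarrow> 'a \<Rightarrow> bool" where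
  "phs s a \<longleftrightarrow> s (a, {}) = W1"

definition hh :: "('a::boolean_algebra \<times> 'a set) \<Rightarrow> (('a \<times> 'a set) \<Rightarrow> wk) \<Rightarrow> wk" where
  "hh x s = hv (phs s) (fst x) (inf (fst x) (crep (snd x)))"

lemma hh_fcls: "hh (i, fcls i a) s = hv (phs s) i (inf i a)"
  by (simp add: hh_def crep_fcls)

lemma phs_mk: "phs (\<lambda>p. if \<phi> (fst p) then W1 else W0) = \<phi>"
  by (auto simp: phs_def fun_eq_iff)

lemma existence:
  fixes I :: "'a::boolean_algebra set"
  assumes "bochvar_system I"
  shows "bochvar_algebra (pl_univ I) pl_meet pl_join pl_neg Jb pl_zero pl_one"
proof -
  have topI: "top \<in> I" and infI: "\<And>i j. i \<in> I \<Longrightarrow> j \<in> I \<Longrightarrow> inf i j \<in> I"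
    using assms by (auto simp: bochvar_system_def)
  let ?U = "pl_univ I"
  let ?X = "{s :: ('a \<times> 'a set) \<Rightarrow> wk. ultra (phs s)}"
  have c1: "\<forall>x\<in>?U. \<forall>y\<in>?U. pl_meet x y \<in> ?U \<and> pl_join x y \<in> ?U"
    by (auto simp: pl_univ_mem pl_meet_fcls pl_join_fcls infI) blast+
  have c2: "\<forall>x\<in>?U. pl_neg x \<in> ?U \<and> Jb x \<in> ?U"
    by (auto simp: pl_univ_mem pl_neg_fcls Jb_fcls topI) blast+
  have c3: "pl_zero \<in> ?U" "pl_one \<in> ?U" by (auto simp: pl_zero_def pl_one_def topI)
  have h1: "\<forall>x\<in>?U. \<forall>y\<in>?U. \<forall>s\<in>?X. hh (pl_meet x y) s = wk_and (hh x s) (hh y s)"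
    by (auto simp: pl_univ_mem pl_meet_fcls hh_fcls hv_def ultra_simps)
  have h2: "\<forall>x\<in>?U. \<forall>y\<in>?U. \<forall>s\<in>?X. hh (pl_join x y) s = wk_or (hh x s) (hh y s)"
    by (auto simp: pl_univ_mem pl_join_fcls hh_fcls hv_def ultra_simps)
  have h3: "\<forall>x\<in>?U. \<forall>s\<in>?X. hh (pl_neg x) s = wk_neg (hh x s)"
    by (auto simp: pl_univ_mem pl_neg_fcls hh_fcls hv_def ultra_simps)
  have h4: "\<forall>x\<in>?U. \<forall>s\<in>?X. hh (Jb x) s = wk_J2 (hh x s)"
    by (auto simp: pl_univ_mem Jb_fcls hh_fcls hv_def ultra_simps)
  have h5: "\<forall>s\<in>?X. hh pl_zero s = W0" "\<forall>s\<in>?X. hh pl_one s = W1"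
    by (auto simp: pl_zero_def pl_one_def hh_fcls hv_def ultra_simps)
  have h6: "\<forall>x\<in>?U. \<forall>y\<in>?U. (\<forall>s\<in>?X. hh x s = hh y s) \<longrightarrow> x = y"
  proof (intro ballI impI)
    fix x y assume "x \<in> ?U" "y \<in> ?U" and eq: "\<forall>s\<in>?X. hh x s = hh y s"
    then obtain i a j b where x: "x = (i, fcls i a)" and y: "y = (j, fcls j b)"
      by (auto simp: pl_univ_mem)
    have e: "hv \<phi> i (inf i a) = hv \<phi> j (inf j b)" if u: "ultra \<phi>" for \<phi>
    proof -
      let ?s = "\<lambda>p. if \<phi> (fst p) then W1 else W0"
      have "?s \<in> ?X" using u by (simp add: phs_mk)
      then have "hh x ?s = hh y ?s" using eq by blast
      then show ?thesis by (simp add: x y hh_fcls phs_mk)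
    qed
    have ij: "i = j"
    proof (rule ultra_sep)
      fix \<phi> :: "'a \<Rightarrow> bool" assume "ultra \<phi>"
      then show "\<phi> i = \<phi> j" using e[of \<phi>] by (auto simp: hv_def split: if_splits)
    qed
    have "inf i a = inf i b"
    proof (rule ultra_sep)
      fix \<phi> :: "'a \<Rightarrow> bool" assume u: "ultra \<phi>"
      then show "\<phi> (inf i a) = \<phi> (inf i b)" using e[of \<phi>] ij
        by (auto simp: hv_def ultra_simps[OF u] split: if_splits)
    qed
    then show "x = y" using x y ij by (simp add: fcls_eq)
  qed
  show ?thesis
    unfolding bochvar_algebra_def
    apply (intro conjI c1 c2 c3)
    apply (rule exI[of _ ?X], rule exI[of _ hh])
    using h1 h2 h3 h4 h5 h6 by blast
qed


lemma uniq:
  fixes I :: "'a::boolean_algebra set"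
  assumes sys: "bochvar_system I"
    and ba: "bochvar_algebra (pl_univ I) pl_meet pl_join pl_neg j2' pl_zero pl_one"
    and xU: "x \<in> pl_univ I"
  shows "j2' x = Jb x"
proof -
  let ?U = "pl_univ I"
  have topI: "top \<in> I" using sys by (simp add: bochvar_system_def)
  have closed: "(\<forall>x\<in>?U. \<forall>y\<in>?U. pl_meet x y \<in> ?U \<and> pl_join x y \<in> ?U)"
     "(\<forall>x\<in>?U. pl_neg x \<in> ?U \<and> j2' x \<in> ?U)" "pl_zero \<in> ?U" "pl_one \<in> ?U"
    using ba[unfolded bochvar_algebra_def]
    by (fact conjunct1 conjunct1[OF conjunct2] conjunct1[OF conjunct2[OF conjunct2]] conjunct1[OF conjunct2[OF conjunct2[OF conjunct2]]])+
  have cm: "\<And>p q. p \<in> ?U \<Longrightarrow> q \<in> ?U \<Longrightarrow> pl_meet p q \<in> ?U" using closed(1) by blast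
  have cj: "\<And>p q. p \<in> ?U \<Longrightarrow> q \<in> ?U \<Longrightarrow> pl_join p q \<in> ?U" using closed(1) by blast
  have cn: "\<And>p. p \<in> ?U \<Longrightarrow> pl_neg p \<in> ?U" using closed(2) by blast
  have cJ: "\<And>p. p \<in> ?U \<Longrightarrow> j2' p \<in> ?U" using closed(2) by blast
  have z1: "pl_zero \<in> ?U" "pl_one \<in> ?U" using closed(3,4) .
  from conjunct2[OF conjunct2[OF conjunct2[OF conjunct2[OF ba[unfolded bochvar_algebra_def]]]]] obtain X :: "(('a \<times> 'a set) \<Rightarrow> wk) set" and h :: "('a \<times> 'a set) \<Rightarrow> (('a \<times> 'a set) \<Rightarrow> wk) \<Rightarrow> wk" where
    Hm: "\<forall>x\<in>?U. \<forall>y\<in>?U. \<forall>s\<in>X. h (pl_meet x y) s = wk_and (h x s) (h y s)" and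
    Hj: "\<forall>x\<in>?U. \<forall>y\<in>?U. \<forall>s\<in>X. h (pl_join x y) s = wk_or (h x s) (h y s)" and
    Hn: "\<forall>x\<in>?U. \<forall>s\<in>X. h (pl_neg x) s = wk_neg (h x s)" and
    HJ: "\<forall>x\<in>?U. \<forall>s\<in>X. h (j2' x) s = wk_J2 (h x s)" and
    H0: "\<forall>s\<in>X. h pl_zero s = W0" and H1: "\<forall>s\<in>X. h pl_one s = W1" and
    Hi: "\<forall>x\<in>?U. \<forall>y\<in>?U. (\<forall>s\<in>X. h x s = h y s) \<longrightarrow> x = y"
    by (elim conjE exE)
  have hm: "\<And>p q s. p \<in> ?U \<Longrightarrow> q \<in> ?U \<Longrightarrow> s \<in> X \<Longrightarrow> h (pl_meet p q) s = wk_and (h p s) (h q s)"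
    using Hm by blast
  have hj: "\<And>p q s. p \<in> ?U \<Longrightarrow> q \<in> ?U \<Longrightarrow> s \<in> X \<Longrightarrow> h (pl_join p q) s = wk_or (h p s) (h q s)"
    using Hj by blast
  have hn: "\<And>p s. p \<in> ?U \<Longrightarrow> s \<in> X \<Longrightarrow> h (pl_neg p) s = wk_neg (h p s)" using Hn by blast
  have hJ: "\<And>p s. p \<in> ?U \<Longrightarrow> s \<in> X \<Longrightarrow> h (j2' p) s = wk_J2 (h p s)" using HJ by blast
  have h0: "\<And>s. s \<in> X \<Longrightarrow> h pl_zero s = W0" using H0 by blast
  have h1: "\<And>s. s \<in> X \<Longrightarrow> h pl_one s = W1" using H1 by blast
  have inj: "\<And>p q. p \<in> ?U \<Longrightarrow> q \<in> ?U \<Longrightarrow> (\<And>s. s \<in> X \<Longrightarrow> h p s = h q s) \<Longrightarrow> p = q"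
    using Hi by blast
  obtain i a where x: "x = (i, fcls i a)" and iI: "i \<in> I" using xU by (auto simp: pl_univ_mem)
  define y where "y = j2' x"
  have yU: "y \<in> ?U" using cJ xU y_def by blast
  then obtain k b where y: "y = (k, fcls k b)" and kI: "k \<in> I" by (auto simp: pl_univ_mem)
  have hy: "h y s = wk_J2 (h x s)" if "s \<in> X" for s using hJ[OF xU that] y_def by simp
  (* step 1: y lies in the top fibre *)
  have "pl_join y (pl_neg y) = pl_one"
  proof (rule inj)
    show "pl_join y (pl_neg y) \<in> ?U" using cj cn yU by blast
    show "pl_one \<in> ?U" by fact
    fix s assume s: "s \<in> X"
    have "h (pl_join y (pl_neg y)) s = wk_or (wk_J2 (h x s)) (wk_neg (wk_J2 (h x s)))"
      using hj[OF yU cn[OF yU] s] hn[OF yU s] hy[OF s] by simp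
    also have "\<dots> = W1" by (cases "h x s") auto
    finally show "h (pl_join y (pl_neg y)) s = h pl_one s" using h1[OF s] by simp
  qed
  then have kt: "k = top" by (simp add: y pl_neg_fcls pl_join_fcls pl_one_def)
  have "pl_meet (pl_neg y) x = pl_meet x (pl_neg x)"
  proof (rule inj)
    show "pl_meet (pl_neg y) x \<in> ?U" using cm cn yU xU by blast
    show "pl_meet x (pl_neg x) \<in> ?U" using cm cn xU by blast
    fix s assume s: "s \<in> X"
    have "h (pl_meet (pl_neg y) x) s = wk_and (wk_neg (wk_J2 (h x s))) (h x s)"
      using hm[OF cn[OF yU] xU s] hn[OF yU s] hy[OF s] by simp
    also have "\<dots> = wk_and (h x s) (wk_neg (h x s))" by (cases "h x s") auto
    also have "\<dots> = h (pl_meet x (pl_neg x)) s" using hm[OF xU cn[OF xU] s] hn[OF xU s] by simp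
    finally show "h (pl_meet (pl_neg y) x) s = h (pl_meet x (pl_neg x)) s" .
  qed
  then have "fcls i (inf (- b) a) = fcls i (inf a (- a))"
    by (simp add: x y kt pl_neg_fcls pl_meet_fcls)
  then have e2: "inf i (inf (- b) a) = bot" by (simp add: fcls_eq)
  define g where "g = (top :: 'a, fcls top (- inf i a))"
  have gU: "g \<in> ?U" using topI by (simp add: g_def)
  have gb: "pl_join g (pl_neg g) = pl_one"
  proof -
    have "pl_join (top, fcls top c) (pl_neg (top, fcls top c)) = pl_one" for c :: 'a
      by (simp add: pl_neg_fcls pl_join_fcls pl_one_def)
    then show ?thesis unfolding g_def .
  qed
  have xg: "pl_meet x g = pl_meet x (pl_neg x)"
  proof -
    have "inf i (inf a (- inf i a)) = bot" by (simp add: inf_sup_distrib1)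
    then show ?thesis by (simp add: x g_def pl_neg_fcls pl_meet_fcls fcls_eq)
  qed
  have "pl_meet y g = pl_zero"
  proof (rule inj)
    show "pl_meet y g \<in> ?U" using cm yU gU by blast
    show "pl_zero \<in> ?U" by fact
    fix s assume s: "s \<in> X"
    have gnh: "h g s \<noteq> Wh"
    proof
      assume "h g s = Wh"
      then have "h (pl_join g (pl_neg g)) s = Wh" using hj[OF gU cn[OF gU] s] hn[OF gU s] by simp
      then show False using gb h1[OF s] by simp
    qed
    have c: "wk_and (h x s) (h g s) = wk_and (h x s) (wk_neg (h x s))"
      using xg hm[OF xU gU s] hm[OF xU cn[OF xU] s] hn[OF xU s] by simp
    have "h (pl_meet y g) s = wk_and (wk_J2 (h x s)) (h g s)"
      using hm[OF yU gU s] hy[OF s] by simp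
    also have "\<dots> = W0" using c gnh by (cases "h x s"; cases "h g s") auto
    finally show "h (pl_meet y g) s = h pl_zero s" using h0[OF s] by simp
  qed
  then have "fcls top (inf b (- inf i a)) = fcls top bot"
    by (simp add: y kt g_def pl_meet_fcls pl_zero_def)
  then have e3: "inf b (- inf i a) = bot" by (simp add: fcls_eq)
  have "b \<le> inf i a" using e3 by (simp add: inf_shunt)
  moreover have "inf i a \<le> b"
  proof -
    have "inf (inf i a) (- b) = bot" using e2 by (simp add: ac_simps)
    then show ?thesis by (simp add: inf_shunt)
  qed
  ultimately have "b = inf i a" by (rule order.antisym)
  then show ?thesis using y_def y kt x by (simp add: Jb_fcls)
qed

theorem theorem3p3:
  fixes I :: "'a::boolean_algebra set"
  assumes "bochvar_system I"
  shows "\<exists>j2 :: ('a \<times> 'a set) \<Rightarrow> ('a \<times> 'a set).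
           bochvar_algebra (pl_univ I) pl_meet pl_join pl_neg j2 pl_zero pl_one \<and>
           (\<forall>j2'. bochvar_algebra (pl_univ I) pl_meet pl_join pl_neg j2' pl_zero pl_one
                   \<longrightarrow> (\<forall>x\<in>pl_univ I. j2' x = j2 x))"
proof (intro exI conjI allI impI ballI)
  show "bochvar_algebra (pl_univ I) pl_meet pl_join pl_neg Jb pl_zero pl_one"
    using existence[OF assms] .
  fix j2' x
  assume "bochvar_algebra (pl_univ I) pl_meet pl_join pl_neg j2' pl_zero pl_one" "x \<in> pl_univ I"
  then show "j2' x = Jb x" using uniq[OF assms] by blast
qed

end
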